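(* Let $x(t)=(x_1(t),x_2(t))$ solve $\dot x=f(x)$ and $x^u(t)$ solve $\dot x^u=h(x^u)$ on $t\ge0$, where $$f(x_1,x_2)=\begin{bmatrix}-Dx_1+\gamma DP\big(M(x_2+Q^* )-M(Q^* )\big)\\ \beta Dx_1-\beta Dx_2\end{bmatrix},\qquad h(x_1,x_2)=\begin{bmatrix}-Dx_1+\gamma DPM(x_2)\\ \beta Dx_1-\beta Dx_2\end{bmatrix}.$$ If $x^u(0)>x(0)$ elementwise, then $x^u(t)\ge x(t)$ elementwise for all $t\ge0$.
   Context: Finite MDP with states $\mathcal S$, actions $\mathcal A$, kernel $P$, expected reward $R$, discount $\gamma\in[0,1)$; $\beta>0$; $n=|\mathcal S||\mathcal A|$. $D$ is the diagonal matrix of a probability distribution $d>0$ on $\mathcal S\times\mathcal A$; $P$ is the $n\times|\mathcal S|$ matrix with row $(s,a)$ equal to $P(\cdot\mid s,a)$; $M(Q)(s)=\max_aQ(s,a)$; $Q^*=R+\gamma PM(Q^* )$. (Both vector fields are globally Lipschitz, so solutions exist and are unique.) *)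

theory Defs
  imports "HOL-Analysis.Analysis"
begin

text \<open>Q-functions are vectors indexed by state-action pairs; value functions by states.
  The transition kernel is given as Pk s a s' = P(s' | s, a).\<close>

definition maxQ :: "real ^ ('s::finite \<times> 'a::finite) \<Rightarrow> real ^ 's" where
  "maxQ Q = (\<chi> s. Max (range (\<lambda>a. Q $ (s, a))))"

definition Pmat :: "('s::finite \<Rightarrow> 'a::finite \<Rightarrow> 's \<Rightarrow> real) \<Rightarrow> real ^ 's \<Rightarrow> real ^ ('s \<times> 'a)" where
  "Pmat Pk v = (\<chi> sa. \<Sum>s'\<in>UNIV. Pk (fst sa) (snd sa) s' * v $ s')"

definition Dmat :: "real ^ 'n::finite \<Rightarrow> real ^ 'n \<Rightarrow> real ^ 'n" where
  "Dmat d x = (\<chi> i. d $ i * x $ i)"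

end

theory Submission
  imports Defs
begin

lemma maxQ_ge: "Q $ (s,a) \<le> maxQ Q $ s"
  unfolding maxQ_def by (auto intro: Max_ge)

lemma maxQ_ex: "\<exists>a. maxQ Q $ s = Q $ (s,a)"
proof -
  have "Max (range (\<lambda>a. Q $ (s, a))) \<in> range (\<lambda>a. Q $ (s, a))" by (rule Max_in) auto
  then obtain a where "Max (range (\<lambda>a. Q $ (s, a))) = Q $ (s, a)" by blast
  then show ?thesis unfolding maxQ_def by (intro exI[of _ a]) simp
qed

lemma maxQ_add: "maxQ (x+y) $ s \<le> maxQ x $ s + maxQ y $ s"
proof -
  obtain a where "maxQ (x+y) $ s = (x+y) $ (s,a)" using maxQ_ex by blast
  then show ?thesis using maxQ_ge[of x s a] maxQ_ge[of y s a] by simp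
qed

lemma maxQ_lower: "(\<And>i. x$i - c \<le> y$i) \<Longrightarrow> maxQ x $ s - c \<le> maxQ y $ s"
proof -
  assume h: "\<And>i. x$i - c \<le> y$i"
  obtain a where "maxQ x $ s = x $ (s,a)" using maxQ_ex by blast
  then show ?thesis using h[of "(s,a)"] maxQ_ge[of y s a] by simp
qed

lemma Pmat_lower:
  assumes "\<And>s a s'. Pk s a s' \<ge> 0" "\<And>s a. (\<Sum>s'\<in>UNIV. Pk s a s') = 1"
    and "\<And>s. -c \<le> v $ s"
  shows "-c \<le> Pmat Pk v $ i"
proof -
  have "(\<Sum>s'\<in>UNIV. Pk (fst i) (snd i) s' * (-c)) \<le> (\<Sum>s'\<in>UNIV. Pk (fst i) (snd i) s' * v $ s')"
    by (rule sum_mono, rule mult_left_mono) (use assms in auto)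
  moreover have "(\<Sum>s'\<in>UNIV. Pk (fst i) (snd i) s' * (-c)) = -c"
  proof -
    have "(\<Sum>s'\<in>UNIV. Pk (fst i) (snd i) s' * (-c)) = (\<Sum>s'\<in>UNIV. Pk (fst i) (snd i) s') * (-c)"
      by (rule sum_distrib_right[symmetric])
    then show ?thesis using assms(2) by simp
  qed
  ultimately show ?thesis unfolding Pmat_def by simp
qed

lemma Pmat_diff: "Pmat Pk v $ i - Pmat Pk w $ i = Pmat Pk (v - w) $ i"
  unfolding Pmat_def by (simp add: sum_subtractf[symmetric] algebra_simps)

lemma comp_deriv: "(f has_vector_derivative f') F \<Longrightarrow> ((\<lambda>t. f t $ i) has_real_derivative f' $ i) F"
  using bounded_linear.has_vector_derivative[OF bounded_linear_vec_nth, of f f' F i]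
  by (simp add: has_real_derivative_iff_has_vector_derivative)

lemma touch:
  fixes z :: "real \<Rightarrow> real"
  assumes "(z has_real_derivative D) (at t within {0..})" "D > 0" "z t \<le> 0"
    "\<And>s. 0 \<le> s \<Longrightarrow> s < t \<Longrightarrow> z s > 0" "t > 0"
  shows False
proof -
  obtain e where e: "e > 0" "\<And>h. h > 0 \<Longrightarrow> t - h \<in> {0..} \<Longrightarrow> h < e \<Longrightarrow> z (t - h) < z t"
    using has_real_derivative_pos_inc_left[OF assms(1,2)] by blast
  define h where "h = min (e/2) t"
  have "h > 0" "h < e" "h \<le> t" using e assms(5) by (auto simp: h_def)
  then have "z (t - h) < z t" using e by auto
  moreover have "z (t - h) > 0" using assms(4) \<open>h > 0\<close> \<open>h \<le> t\<close> by auto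
  ultimately show False using assms(3) by simp
qed


theorem mainTheorem9:
  fixes Pk :: "'s::finite \<Rightarrow> 'a::finite \<Rightarrow> 's \<Rightarrow> real"
    and R d Qs :: "real ^ ('s \<times> 'a)"
    and \<gamma> \<beta> :: real
    and x1 x2 xu1 xu2 :: "real \<Rightarrow> real ^ ('s \<times> 'a)"
  assumes P_nonneg: "\<And>s a s'. Pk s a s' \<ge> 0"
    and P_sum: "\<And>s a. (\<Sum>s'\<in>UNIV. Pk s a s') = 1"
    and gamma: "0 \<le> \<gamma>" "\<gamma> < 1"
    and beta: "\<beta> > 0"
    and d_pos: "\<And>i. d $ i > 0"
    and d_sum: "(\<Sum>i\<in>UNIV. d $ i) = 1"
    and Qs_fix: "Qs = R + \<gamma> *\<^sub>R Pmat Pk (maxQ Qs)"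
    and x1_ode: "\<And>t. t \<ge> 0 \<Longrightarrow> (x1 has_vector_derivative
        (- Dmat d (x1 t) + \<gamma> *\<^sub>R Dmat d (Pmat Pk (maxQ (x2 t + Qs) - maxQ Qs)))) (at t within {0..})"
    and x2_ode: "\<And>t. t \<ge> 0 \<Longrightarrow> (x2 has_vector_derivative
        (\<beta> *\<^sub>R Dmat d (x1 t) - \<beta> *\<^sub>R Dmat d (x2 t))) (at t within {0..})"
    and xu1_ode: "\<And>t. t \<ge> 0 \<Longrightarrow> (xu1 has_vector_derivative
        (- Dmat d (xu1 t) + \<gamma> *\<^sub>R Dmat d (Pmat Pk (maxQ (xu2 t))))) (at t within {0..})"
    and xu2_ode: "\<And>t. t \<ge> 0 \<Longrightarrow> (xu2 has_vector_derivative
        (\<beta> *\<^sub>R Dmat d (xu1 t) - \<beta> *\<^sub>R Dmat d (xu2 t))) (at t within {0..})"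
    and init: "\<And>i. xu1 0 $ i > x1 0 $ i" "\<And>i. xu2 0 $ i > x2 0 $ i"
  shows "\<forall>t\<ge>0. \<forall>i. xu1 t $ i \<ge> x1 t $ i \<and> xu2 t $ i \<ge> x2 t $ i"
proof -
  define F1 where "F1 t = - Dmat d (x1 t) + \<gamma> *\<^sub>R Dmat d (Pmat Pk (maxQ (x2 t + Qs) - maxQ Qs))" for t
  define F2 where "F2 t = \<beta> *\<^sub>R Dmat d (x1 t) - \<beta> *\<^sub>R Dmat d (x2 t)" for t
  define A1 where "A1 t = - Dmat d (xu1 t) + \<gamma> *\<^sub>R Dmat d (Pmat Pk (maxQ (xu2 t)))" for t
  define A2 where "A2 t = \<beta> *\<^sub>R Dmat d (xu1 t) - \<beta> *\<^sub>R Dmat d (xu2 t)" for t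
  have key: "xu1 t $ i - x1 t $ i + \<epsilon> * exp t > 0 \<and> xu2 t $ i - x2 t $ i + \<epsilon> * exp t > 0"
    if eps: "\<epsilon> > 0" and t0: "t \<ge> 0" for \<epsilon> t i
  proof -
    define z1 where "z1 i t = xu1 t $ i - x1 t $ i + \<epsilon> * exp t" for i t
    define z2 where "z2 i t = xu2 t $ i - x2 t $ i + \<epsilon> * exp t" for i t
    have dexp: "((\<lambda>z. \<epsilon> * exp z) has_real_derivative \<epsilon> * exp t) (at t within {0..})" for t
      by (rule has_field_derivative_at_within, rule DERIV_cmult, rule DERIV_exp)
    have dz1: "(z1 i has_real_derivative (A1 t $ i - F1 t $ i + \<epsilon> * exp t)) (at t within {0..})"
      if "t \<ge> 0" for i t
      unfolding z1_def
      by (intro derivative_intros comp_deriv) (use that x1_ode xu1_ode dexp A1_def F1_def in auto)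
    have dz2: "(z2 i has_real_derivative (A2 t $ i - F2 t $ i + \<epsilon> * exp t)) (at t within {0..})"
      if "t \<ge> 0" for i t
      unfolding z2_def
      by (intro derivative_intros comp_deriv) (use that x2_ode xu2_ode dexp A2_def F2_def in auto)
    have c1: "continuous_on {0..} (z1 i)" for i
      using dz1 by (metis atLeast_iff continuous_on_eq_continuous_within DERIV_continuous)
    have c2: "continuous_on {0..} (z2 i)" for i
      using dz2 by (metis atLeast_iff continuous_on_eq_continuous_within DERIV_continuous)
    define S where "S = (\<Union>i. ({0..} \<inter> z1 i -` {..0}) \<union> ({0..} \<inter> z2 i -` {..0}))"
    have clS: "closed S" unfolding S_def
      by (intro closed_Union finite_imageI finite_UNIV ballI)
         (auto intro!: closed_Un continuous_closed_preimage c1 c2)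
    have S_iff: "s \<in> S \<longleftrightarrow> s \<ge> 0 \<and> (\<exists>i. z1 i s \<le> 0 \<or> z2 i s \<le> 0)" for s
      unfolding S_def by auto
    show ?thesis
    proof (rule ccontr)
      assume "\<not> ?thesis"
      then have "z1 i t \<le> 0 \<or> z2 i t \<le> 0" by (auto simp: z1_def z2_def)
      then have "t \<in> S" using t0 S_iff by blast
      then have SnE: "S \<noteq> {}" by auto
      have bdd: "bdd_below S" by (rule bdd_belowI[of _ 0]) (auto simp: S_iff)
      define T where "T = Inf S"
      have TS: "T \<in> S" unfolding T_def by (rule closed_contains_Inf[OF SnE bdd clS])
      have below: "z1 j s > 0 \<and> z2 j s > 0" if "0 \<le> s" "s < T" for j s
      proof -
        have "s \<notin> S" using that cInf_lower[OF _ bdd, of s] by (auto simp: T_def)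
        then have "\<not> (z1 j s \<le> 0 \<or> z2 j s \<le> 0)" using that S_iff by blast
        then show ?thesis by simp
      qed
      have z0: "z1 j 0 > 0 \<and> z2 j 0 > 0" for j
        using init[of j] eps by (auto simp: z1_def z2_def)
      have Tpos: "T > 0"
      proof -
        have "T \<ge> 0" using TS by (auto simp: S_iff)
        moreover have "T \<noteq> 0"
        proof
          assume "T = 0"
          then obtain j where "z1 j 0 \<le> 0 \<or> z2 j 0 \<le> 0" using TS S_iff by blast
          then show False using z0[of j] by linarith
        qed
        ultimately show ?thesis by simp
      qed
      have nonneg: "z1 j T \<ge> 0 \<and> z2 j T \<ge> 0" for j
      proof -
        have cl: "closed ({0..} \<inter> z1 j -` {0..})" "closed ({0..} \<inter> z2 j -` {0..})"
          by (auto intro!: continuous_closed_preimage c1 c2)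
        have sub: "{0..<T} \<subseteq> {0..} \<inter> z1 j -` {0..}" "{0..<T} \<subseteq> {0..} \<inter> z2 j -` {0..}"
          using below[where j=j] by (fastforce intro: less_imp_le)+
        have "closure {0..<T} \<subseteq> {0..} \<inter> z1 j -` {0..}" "closure {0..<T} \<subseteq> {0..} \<inter> z2 j -` {0..}"
          using closure_minimal[OF sub(1) cl(1)] closure_minimal[OF sub(2) cl(2)] by auto
        then show ?thesis using closure_atLeastLessThan[OF Tpos] Tpos by (auto simp: subset_iff)
      qed
      define c where "c = \<epsilon> * exp T"
      have cpos: "c > 0" using eps by (simp add: c_def)
      have e1: "xu1 T $ j - x1 T $ j \<ge> - c" and e2: "xu2 T $ j - x2 T $ j \<ge> - c" for j
        using nonneg[of j] by (auto simp: z1_def z2_def c_def)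
      from TS obtain i where "z1 i T \<le> 0 \<or> z2 i T \<le> 0" by (auto simp: S_iff)
      then show False
      proof
        assume h: "z1 i T \<le> 0"
        then have eq: "xu1 T $ i - x1 T $ i = - c" using nonneg[of i] by (auto simp: z1_def c_def)
        have mv: "- c \<le> (maxQ (xu2 T) - (maxQ (x2 T + Qs) - maxQ Qs)) $ s" for s
        proof -
          have "maxQ (x2 T) $ s - c \<le> maxQ (xu2 T) $ s"
          proof (rule maxQ_lower)
            fix k show "x2 T $ k - c \<le> xu2 T $ k" using e2[of k] by linarith
          qed
          then show ?thesis using maxQ_add[of "x2 T" Qs s] by simp
        qed
        have pl: "- c \<le> Pmat Pk (maxQ (xu2 T)) $ i - Pmat Pk (maxQ (x2 T + Qs) - maxQ Qs) $ i"
          unfolding Pmat_diff by (rule Pmat_lower[OF P_nonneg P_sum mv])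
        have gd: "\<gamma> * d $ i \<ge> 0" using gamma d_pos[of i] by simp
        have "A1 T $ i - F1 T $ i = - d $ i * (xu1 T $ i - x1 T $ i)
            + \<gamma> * d $ i * (Pmat Pk (maxQ (xu2 T)) $ i - Pmat Pk (maxQ (x2 T + Qs) - maxQ Qs) $ i)"
          by (simp add: A1_def F1_def Dmat_def algebra_simps)
        also have "\<dots> \<ge> d $ i * c - \<gamma> * d $ i * c"
          using mult_left_mono[OF pl gd] eq by simp
        finally have "A1 T $ i - F1 T $ i \<ge> d $ i * c * (1 - \<gamma>)" by (simp add: algebra_simps)
        moreover have "d $ i * c * (1 - \<gamma>) \<ge> 0" using d_pos[of i] cpos gamma by simp
        ultimately have "A1 T $ i - F1 T $ i + \<epsilon> * exp T > 0" using cpos by (simp add: c_def)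
        then show False using touch[OF dz1[of T i] _ h _ Tpos] below Tpos by auto
      next
        assume h: "z2 i T \<le> 0"
        then have eq: "xu2 T $ i - x2 T $ i = - c" using nonneg[of i] by (auto simp: z2_def c_def)
        have "A2 T $ i - F2 T $ i = \<beta> * d $ i * ((xu1 T $ i - x1 T $ i) - (xu2 T $ i - x2 T $ i))"
          by (simp add: A2_def F2_def Dmat_def algebra_simps)
        moreover have "(xu1 T $ i - x1 T $ i) - (xu2 T $ i - x2 T $ i) \<ge> 0" using e1[of i] eq by simp
        moreover have "\<beta> * d $ i \<ge> 0" using beta d_pos[of i] by simp
        ultimately have "A2 T $ i - F2 T $ i \<ge> 0" by simp
        then have "A2 T $ i - F2 T $ i + \<epsilon> * exp T > 0" using cpos by (simp add: c_def)
        then show False using touch[OF dz2[of T i] _ h _ Tpos] below Tpos by auto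
      qed
    qed
  qed
  have lim: "a \<ge> b" if "\<And>\<epsilon>. \<epsilon> > 0 \<Longrightarrow> a - b + \<epsilon> * exp t > 0" for a b t :: real
  proof (rule ccontr)
    assume "\<not> a \<ge> b"
    then have "(b - a) / (2 * exp t) > 0" by simp
    from that[OF this] show False using \<open>\<not> a \<ge> b\<close> by (simp add: field_simps)
  qed
  show ?thesis
  proof (intro allI impI conjI)
    fix t :: real and i assume "t \<ge> 0"
    show "xu1 t $ i \<ge> x1 t $ i" by (rule lim[where t=t]) (use key \<open>t \<ge> 0\<close> in blast)
    show "xu2 t $ i \<ge> x2 t $ i" by (rule lim[where t=t]) (use key \<open>t \<ge> 0\<close> in blast)
  qed
qed

end
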